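(* Let $G$ be a crossing closed graph on $[n]$. Then $G$ is upper crossing closed if and only if $G$ contains no obstruction as a subgraph.
   Context: Graphs are finite simple graphs with vertex set $[n]$; edges are written $ij$ with $i<j$. Two edges $a_1a_2$ and $b_1b_2$ cross if $a_1<b_1<a_2<b_2$ or $b_1<a_1<b_2<a_2$. Two crossing edges $e,f$ are crossing closed if among all induced connected subgraphs of $G$ containing $e$ and $f$ there is a unique minimal one under containment, denoted $J(e,f)$; $G$ is crossing closed if all pairs of crossing edges are. $G$ is upper crossing closed if it is crossing closed and there is a total order $\unlhd$ on $E(G)$ such that for every pair of crossing edges $e,f$, $J(e,f)$ contains an edge $h$ with $h\lhd e$ and $h\lhd f$. For crossing closed $G$, a subgraph $H$ of $G$ is an obstruction if for every edge $e$ of $H$ there is an edge $f$ of $H$ crossing $e$ with $J(e,f)\subseteq H$. *)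

theory Defs
  imports Main
begin

definition graph_on :: "nat \<Rightarrow> (nat \<times> nat) set \<Rightarrow> bool" where
  "graph_on n E \<longleftrightarrow> (\<forall>(i,j)\<in>E. 1 \<le> i \<and> i < j \<and> j \<le> n)"

definition crosses :: "nat \<times> nat \<Rightarrow> nat \<times> nat \<Rightarrow> bool" where
  "crosses e f \<longleftrightarrow> (case e of (a1,a2) \<Rightarrow> case f of (b1,b2) \<Rightarrow>
      (a1 < b1 \<and> b1 < a2 \<and> a2 < b2) \<or> (b1 < a1 \<and> a1 < b2 \<and> b2 < a2))"

definition induced_edges :: "(nat \<times> nat) set \<Rightarrow> nat set \<Rightarrow> (nat \<times> nat) set" where
  "induced_edges E S = {(i,j) \<in> E. i \<in> S \<and> j \<in> S}"

definition connected_induced :: "(nat \<times> nat) set \<Rightarrow> nat set \<Rightarrow> bool" where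
  "connected_induced E S \<longleftrightarrow> S \<noteq> {} \<and>
     (\<forall>u\<in>S. \<forall>v\<in>S. (u,v) \<in> (induced_edges E S \<union> (induced_edges E S)\<inverse>)\<^sup>*)"

text \<open>Vertex sets S of induced connected subgraphs of G containing edges e and f.
  (Induced subgraphs are determined by, and ordered by containment exactly as, their vertex sets.)\<close>
definition joins :: "nat \<Rightarrow> (nat \<times> nat) set \<Rightarrow> nat \<times> nat \<Rightarrow> nat \<times> nat \<Rightarrow> nat set \<Rightarrow> bool" where
  "joins n E e f S \<longleftrightarrow> S \<subseteq> {1..n} \<and> connected_induced E S \<and>
     e \<in> induced_edges E S \<and> f \<in> induced_edges E S"

definition minimal_join :: "nat \<Rightarrow> (nat \<times> nat) set \<Rightarrow> nat \<times> nat \<Rightarrow> nat \<times> nat \<Rightarrow> nat set \<Rightarrow> bool" where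
  "minimal_join n E e f S \<longleftrightarrow> joins n E e f S \<and> (\<forall>T. joins n E e f T \<and> T \<subseteq> S \<longrightarrow> T = S)"

definition pair_crossing_closed :: "nat \<Rightarrow> (nat \<times> nat) set \<Rightarrow> nat \<times> nat \<Rightarrow> nat \<times> nat \<Rightarrow> bool" where
  "pair_crossing_closed n E e f \<longleftrightarrow> (\<exists>!S. minimal_join n E e f S)"

definition J_vertices :: "nat \<Rightarrow> (nat \<times> nat) set \<Rightarrow> nat \<times> nat \<Rightarrow> nat \<times> nat \<Rightarrow> nat set" where
  "J_vertices n E e f = (THE S. minimal_join n E e f S)"

definition J_edges :: "nat \<Rightarrow> (nat \<times> nat) set \<Rightarrow> nat \<times> nat \<Rightarrow> nat \<times> nat \<Rightarrow> (nat \<times> nat) set" where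
  "J_edges n E e f = induced_edges E (J_vertices n E e f)"

definition crossing_closed :: "nat \<Rightarrow> (nat \<times> nat) set \<Rightarrow> bool" where
  "crossing_closed n E \<longleftrightarrow> (\<forall>e\<in>E. \<forall>f\<in>E. crosses e f \<longrightarrow> pair_crossing_closed n E e f)"

text \<open>R is the strict part of a total order on E(G); (h,e) \<in> R means h \<lhd> e.\<close>
definition upper_crossing_closed :: "nat \<Rightarrow> (nat \<times> nat) set \<Rightarrow> bool" where
  "upper_crossing_closed n E \<longleftrightarrow> crossing_closed n E \<and>
     (\<exists>R. R \<subseteq> E \<times> E \<and> strict_linear_order_on E R \<and>
        (\<forall>e\<in>E. \<forall>f\<in>E. crosses e f \<longrightarrow> (\<exists>h\<in>J_edges n E e f. (h,e) \<in> R \<and> (h,f) \<in> R)))"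

definition obstruction :: "nat \<Rightarrow> (nat \<times> nat) set \<Rightarrow> nat set \<Rightarrow> (nat \<times> nat) set \<Rightarrow> bool" where
  "obstruction n E W F \<longleftrightarrow> W \<subseteq> {1..n} \<and> F \<subseteq> E \<and> (\<forall>(i,j)\<in>F. i \<in> W \<and> j \<in> W) \<and> F \<noteq> {} \<and>
     (\<forall>e\<in>F. \<exists>f\<in>F. crosses e f \<and> J_vertices n E e f \<subseteq> W \<and> J_edges n E e f \<subseteq> F)"

end

theory Submission
  imports Defs
begin

lemma joins_sym: "joins n E e f S = joins n E f e S"
  unfolding joins_def by auto

lemma J_edges_sym: "J_edges n E e f = J_edges n E f e"
  unfolding J_edges_def J_vertices_def minimal_join_def joins_sym[of n E e f]
  by (simp add: joins_sym)

lemma J_edges_sub: "J_edges n E e f \<subseteq> E"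
  unfolding J_edges_def induced_edges_def by auto

lemma crosses_irrefl: "\<not> crosses e e"
  unfolding crosses_def by (auto split: prod.splits)

lemma J_vertices_sub:
  assumes "crossing_closed n E" "e \<in> E" "f \<in> E" "crosses e f"
  shows "J_vertices n E e f \<subseteq> {1..n}"
proof -
  have "pair_crossing_closed n E e f" using assms unfolding crossing_closed_def by blast
  hence "minimal_join n E e f (J_vertices n E e f)"
    unfolding pair_crossing_closed_def J_vertices_def by (rule theI')
  thus ?thesis unfolding minimal_join_def joins_def by blast
qed

lemma finite_E: assumes "graph_on n E" shows "finite E"
proof -
  have "E \<subseteq> {1..n} \<times> {1..n}" using assms unfolding graph_on_def by auto
  thus ?thesis by (rule finite_subset) auto
qed

lemma build_order:
  assumes fin: "finite F"
    and sub: "F \<subseteq> E"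
    and pick: "\<And>F. F \<subseteq> E \<Longrightarrow> F \<noteq> {} \<Longrightarrow> \<exists>x\<in>F. \<forall>f\<in>F. crosses x f \<longrightarrow> \<not> J_edges n E x f \<subseteq> F"
  shows "\<exists>R. R \<subseteq> F \<times> F \<and> strict_linear_order_on F R \<and>
     (\<forall>e\<in>F. \<forall>f\<in>F. crosses e f \<longrightarrow> (\<exists>h\<in>J_edges n E e f. h \<notin> F \<or> ((h,e) \<in> R \<and> (h,f) \<in> R)))"
  using fin sub
proof (induction F rule: finite_psubset_induct)
  case (psubset F)
  show ?case
  proof (cases "F = {}")
    case True
    have "strict_linear_order_on F {}" unfolding True strict_linear_order_on_def trans_def irrefl_def total_on_def
      by simp
    then show ?thesis using True by auto
  next
    case False
    then obtain x where x: "x \<in> F" and xp: "\<forall>f\<in>F. crosses x f \<longrightarrow> \<not> J_edges n E x f \<subseteq> F"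
      using pick psubset.prems by blast
    define F' where "F' = F - {x}"
    have "F' \<subset> F" using x F'_def by auto
    then obtain R' where R'1: "R' \<subseteq> F' \<times> F'" and R'2: "strict_linear_order_on F' R'"
      and R'3: "\<forall>e\<in>F'. \<forall>f\<in>F'. crosses e f \<longrightarrow> (\<exists>h\<in>J_edges n E e f. h \<notin> F' \<or> ((h,e) \<in> R' \<and> (h,f) \<in> R'))"
      using psubset.IH[of F'] psubset.prems \<open>F' \<subset> F\<close> by auto
    define R where "R = R' \<union> {(x,y) | y. y \<in> F'}"
    have "R \<subseteq> F \<times> F" using R'1 x unfolding R_def F'_def by auto
    moreover have "strict_linear_order_on F R"
    proof -
      have t: "trans R'" and i: "irrefl R'" and to: "total_on F' R'"
        using R'2 unfolding strict_linear_order_on_def by auto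
      have xF: "x \<notin> F'" unfolding F'_def by simp
      have "trans R" unfolding trans_def R_def
      proof (intro allI impI)
        fix a b c assume ab: "(a, b) \<in> R' \<union> {(x, y) |y. y \<in> F'}" and bc: "(b, c) \<in> R' \<union> {(x, y) |y. y \<in> F'}"
        show "(a, c) \<in> R' \<union> {(x, y) |y. y \<in> F'}"
          using ab bc t R'1 xF unfolding trans_def by blast
      qed
      moreover have "irrefl R" using i xF unfolding R_def irrefl_def by blast
      moreover have "total_on F R"
        unfolding total_on_def R_def
      proof (intro ballI impI)
        fix a b assume a: "a \<in> F" and b: "b \<in> F" and ab: "a \<noteq> b"
        show "(a, b) \<in> R' \<union> {(x, y) |y. y \<in> F'} \<or> (b, a) \<in> R' \<union> {(x, y) |y. y \<in> F'}"
        proof (cases "a = x \<or> b = x")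
          case True then show ?thesis using a b ab unfolding F'_def by blast
        next
          case False then have "a \<in> F'" "b \<in> F'" using a b F'_def by auto
          then show ?thesis using to ab unfolding total_on_def by blast
        qed
      qed
      ultimately show ?thesis unfolding strict_linear_order_on_def by blast
    qed
    moreover have "\<forall>e\<in>F. \<forall>f\<in>F. crosses e f \<longrightarrow> (\<exists>h\<in>J_edges n E e f. h \<notin> F \<or> ((h,e) \<in> R \<and> (h,f) \<in> R))"
    proof (intro ballI impI)
      fix e f assume e: "e \<in> F" and f: "f \<in> F" and c: "crosses e f"
      show "\<exists>h\<in>J_edges n E e f. h \<notin> F \<or> ((h,e) \<in> R \<and> (h,f) \<in> R)"
      proof (cases "e = x")
        case True
        then show ?thesis using xp f c by blast
      next
        case ne: False
        show ?thesis
        proof (cases "f = x")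
          case True
          have "crosses f e" using c unfolding crosses_def by (auto split: prod.splits)
          then show ?thesis using xp e True J_edges_sym[of n E e f] by blast
        next
          case nf: False
          have "e \<in> F'" "f \<in> F'" using e f ne nf F'_def by auto
          then obtain h where h: "h \<in> J_edges n E e f" "h \<notin> F' \<or> ((h,e) \<in> R' \<and> (h,f) \<in> R')"
            using R'3 c by blast
          show ?thesis
          proof (cases "h = x")
            case True
            then show ?thesis using h `e \<in> F'` `f \<in> F'` unfolding R_def by blast
          next
            case False
            then show ?thesis using h F'_def unfolding R_def by blast
          qed
        qed
      qed
    qed
    ultimately show ?thesis by blast
  qed
qed

theorem theoremA4:
  fixes n :: nat and E :: "(nat \<times> nat) set"
  assumes "graph_on n E" and "crossing_closed n E"
  shows "upper_crossing_closed n E \<longleftrightarrow> \<not> (\<exists>W F. obstruction n E W F)"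
proof
  assume "upper_crossing_closed n E"
  then obtain R where R1: "R \<subseteq> E \<times> E" and R2: "strict_linear_order_on E R"
    and R3: "\<forall>e\<in>E. \<forall>f\<in>E. crosses e f \<longrightarrow> (\<exists>h\<in>J_edges n E e f. (h,e) \<in> R \<and> (h,f) \<in> R)"
    unfolding upper_crossing_closed_def by blast
  show "\<not> (\<exists>W F. obstruction n E W F)"
  proof
    assume "\<exists>W F. obstruction n E W F"
    then obtain W F where ob: "obstruction n E W F" by blast
    have FE: "F \<subseteq> E" and Fne: "F \<noteq> {}" using ob unfolding obstruction_def by auto
    have finR: "finite R" using R1 finite_E[OF assms(1)]
      by (meson finite_SigmaI finite_subset)
    have "acyclic R" using R2 unfolding strict_linear_order_on_def acyclic_irrefl by simp
    hence "wf R" using finR finite_acyclic_wf by blast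
    then obtain e where e: "e \<in> F" and emin: "\<And>y. (y,e) \<in> R \<Longrightarrow> y \<notin> F"
      using Fne by (metis wfE_min ex_in_conv)
    obtain f where f: "f \<in> F" "crosses e f" "J_edges n E e f \<subseteq> F"
      using ob e unfolding obstruction_def by blast
    then obtain h where "h \<in> J_edges n E e f" "(h,e) \<in> R"
      using R3 e f FE by blast
    thus False using f emin by blast
  qed
next
  assume no: "\<not> (\<exists>W F. obstruction n E W F)"
  have pick: "\<exists>x\<in>F. \<forall>f\<in>F. crosses x f \<longrightarrow> \<not> J_edges n E x f \<subseteq> F"
    if FE: "F \<subseteq> E" and Fne: "F \<noteq> {}" for F
  proof (rule ccontr)
    assume "\<not> ?thesis"
    hence "\<forall>e\<in>F. \<exists>f\<in>F. crosses e f \<and> J_edges n E e f \<subseteq> F" by blast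
    hence "\<forall>e\<in>F. \<exists>f\<in>F. crosses e f \<and> J_vertices n E e f \<subseteq> {1..n} \<and> J_edges n E e f \<subseteq> F"
      using J_vertices_sub[OF assms(2)] FE by blast
    moreover have "\<forall>(i,j)\<in>F. i \<in> {1..n} \<and> j \<in> {1..n}"
      using FE assms(1) unfolding graph_on_def by fastforce
    ultimately have "obstruction n E {1..n} F"
      unfolding obstruction_def using FE Fne by blast
    thus False using no by blast
  qed
  obtain R where R1: "R \<subseteq> E \<times> E" and R2: "strict_linear_order_on E R"
    and R3: "\<forall>e\<in>E. \<forall>f\<in>E. crosses e f \<longrightarrow> (\<exists>h\<in>J_edges n E e f. h \<notin> E \<or> ((h,e) \<in> R \<and> (h,f) \<in> R))"
    using build_order[OF finite_E[OF assms(1)] order_refl pick] by blast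
  have "\<forall>e\<in>E. \<forall>f\<in>E. crosses e f \<longrightarrow> (\<exists>h\<in>J_edges n E e f. (h,e) \<in> R \<and> (h,f) \<in> R)"
    using R3 J_edges_sub by blast
  thus "upper_crossing_closed n E"
    unfolding upper_crossing_closed_def using assms(2) R1 R2 by blast
qed

end
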